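(* Let $W\subset\mathbb{P}^n$ be a smooth nondegenerate rational normal surface scroll of minimal degree $n-1$ (a ruled surface over $\mathbb{P}^1$ whose rulings are lines), and let $Y\subset W$ be a rational normal curve of degree $k$ with $2\le k\le n-1$. If there exists a linear subspace $\mathbb{P}^k\subset\mathbb{P}^n$ with $Y\subset W\cap\mathbb{P}^k$, then $Y=W\cap\mathbb{P}^k$ (set-theoretically). *)

theory Defs
  imports Complex_Main "Jordan_Normal_Form.Matrix"
begin

text \<open>Projective space P^n over the complex numbers: a subset of P^n is represented
  by its affine cone minus the origin, i.e. a set of nonzero vectors in C^(n+1)
  closed under nonzero scalars.\<close>

definition proj_cone :: "complex vec set \<Rightarrow> complex vec set" where
  "proj_cone S = {c \<cdot>\<^sub>v x | c x. c \<noteq> 0 \<and> x \<in> S}"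

text \<open>Standard parametrization of the rational normal scroll S(a,b) in P^(a+b+1):
  ([s:t],[u:v]) maps to [u s^a : u s^(a-1) t : ... : u t^a : v s^b : ... : v t^b].\<close>

definition scroll_param :: "nat \<Rightarrow> nat \<Rightarrow> complex \<Rightarrow> complex \<Rightarrow> complex \<Rightarrow> complex \<Rightarrow> complex vec" where
  "scroll_param a b s t u v = vec (a + b + 2)
     (\<lambda>i. if i \<le> a then u * s ^ (a - i) * t ^ i
          else v * s ^ (b - (i - a - 1)) * t ^ (i - a - 1))"

definition scroll_cone :: "nat \<Rightarrow> nat \<Rightarrow> complex vec set" where
  "scroll_cone a b = proj_cone
     {scroll_param a b s t u v | s t u v. (s, t) \<noteq> (0, 0) \<and> (u, v) \<noteq> (0, 0)}"

definition smooth_rat_normal_surface_scroll :: "nat \<Rightarrow> complex vec set \<Rightarrow> bool" where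
  "smooth_rat_normal_surface_scroll n W \<longleftrightarrow>
     (\<exists>a b A. 1 \<le> a \<and> 1 \<le> b \<and> a + b + 1 = n \<and>
        A \<in> carrier_mat (n + 1) (n + 1) \<and> invertible_mat A \<and>
        W = (\<lambda>x. A *\<^sub>v x) ` scroll_cone a b)"

definition rnc_cone :: "nat \<Rightarrow> complex vec set" where
  "rnc_cone k = proj_cone {vec (k + 1) (\<lambda>i. s ^ (k - i) * t ^ i) | s t. (s, t) \<noteq> (0, 0)}"

definition lin_embedding :: "nat \<Rightarrow> nat \<Rightarrow> complex mat \<Rightarrow> bool" where
  "lin_embedding n m B \<longleftrightarrow> B \<in> carrier_mat (n + 1) (m + 1) \<and>
     (\<forall>x \<in> carrier_vec (m + 1). B *\<^sub>v x = 0\<^sub>v (n + 1) \<longrightarrow> x = 0\<^sub>v (m + 1))"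

definition rat_normal_curve :: "nat \<Rightarrow> nat \<Rightarrow> complex vec set \<Rightarrow> bool" where
  "rat_normal_curve n k Y \<longleftrightarrow>
     (\<exists>B. lin_embedding n k B \<and> Y = (\<lambda>x. B *\<^sub>v x) ` rnc_cone k)"

definition lin_subspace :: "nat \<Rightarrow> nat \<Rightarrow> complex vec set \<Rightarrow> bool" where
  "lin_subspace n m L \<longleftrightarrow>
     (\<exists>C. lin_embedding n m C \<and>
        L = {C *\<^sub>v y | y. y \<in> carrier_vec (m + 1) \<and> y \<noteq> 0\<^sub>v (m + 1)})"

end

theory Submission
  imports Defs "Jordan_Normal_Form.Determinant" "HOL-Computational_Algebra.Polynomial_Factorial" "HOL-Computational_Algebra.Field_as_Ring"
begin

definition bhom :: "nat \<Rightarrow> complex poly \<Rightarrow> complex \<Rightarrow> complex \<Rightarrow> complex" where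
  "bhom d p s t = (\<Sum>i\<le>d. coeff p i * s^(d-i) * t^i)"

lemma hom_add: "bhom d (p + q) s t = bhom d p s t + bhom d q s t"
  by (simp add: bhom_def sum.distrib algebra_simps)

lemma hom_smult: "bhom d (smult c p) s t = c * bhom d p s t"
  by (simp add: bhom_def sum_distrib_left algebra_simps)

lemma hom_uminus: "bhom d (- p) s t = - bhom d p s t"
  by (simp add: bhom_def sum_negf)

lemma hom_0[simp]: "bhom d 0 s t = 0"
  by (simp add: bhom_def)

lemma hom_sum: "bhom d (\<Sum>x\<in>A. f x) s t = (\<Sum>x\<in>A. bhom d (f x) s t)"
  unfolding bhom_def coeff_sum sum_distrib_right
  by (rule sum.swap)

lemma poly_ext_sum: "degree (p::complex poly) \<le> d \<Longrightarrow> poly p x = (\<Sum>i\<le>d. coeff p i * x^i)"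
proof -
  assume a: "degree p \<le> d"
  have "poly p x = (\<Sum>i\<le>degree p. coeff p i * x^i)" by (rule poly_altdef)
  also have "\<dots> = (\<Sum>i\<le>d. coeff p i * x^i)"
    by (rule sum.mono_neutral_left) (use a in \<open>auto simp: coeff_eq_0\<close>)
  finally show ?thesis .
qed

lemma hom_nz: assumes "s \<noteq> 0" "degree p \<le> d"
  shows "bhom d p s t = s^d * poly p (t/s)"
proof -
  have "s^d * poly p (t/s) = (\<Sum>i\<le>d. coeff p i * (s^d * (t/s)^i))"
    unfolding poly_ext_sum[OF assms(2)] sum_distrib_left by (simp add: algebra_simps)
  also have "\<dots> = (\<Sum>i\<le>d. coeff p i * s^(d-i) * t^i)"
  proof (rule sum.cong)
    fix i assume "i \<in> {..d}"
    then have "s^d = s^(d-i) * s^i" by (simp add: power_add[symmetric])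
    then have "s^d * (t/s)^i = s^(d-i) * t^i" using assms(1) by (simp add: power_divide)
    then show "coeff p i * (s^d * (t/s)^i) = coeff p i * s^(d-i) * t^i" by simp
  qed simp
  finally show ?thesis unfolding bhom_def by simp
qed

lemma hom_zs: "bhom d p 0 t = coeff p d * t^d"
proof -
  have "bhom d p 0 t = (\<Sum>i\<le>d. if i = d then coeff p d * t^d else 0)"
    unfolding bhom_def by (rule sum.cong) auto
  then show ?thesis by simp
qed

lemma coeff_mult_bound: assumes "degree p \<le> d" "degree q \<le> e"
  shows "coeff (p * q) (d + e) = coeff p d * coeff q e"
proof -
  have "coeff (p * q) (d + e) = (\<Sum>i\<le>d+e. if i = d then coeff p d * coeff q e else 0)"
    unfolding coeff_mult
  proof (rule sum.cong)
    fix i assume "i \<in> {..d+e}"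
    show "coeff p i * coeff q (d + e - i) = (if i = d then coeff p d * coeff q e else 0)"
    proof (cases "i < d")
      case True then have "coeff q (d+e-i) = 0" using assms(2) by (intro coeff_eq_0) auto
      then show ?thesis using True by auto
    next
      case False
      show ?thesis
      proof (cases "i = d")
        case False
        with \<open>\<not> i < d\<close> have "coeff p i = 0" using assms(1) by (intro coeff_eq_0) auto
        then show ?thesis using False by auto
      qed simp
    qed
  qed simp
  then show ?thesis by simp
qed

lemma hom_mult: assumes "degree p \<le> d" "degree q \<le> e"
  shows "bhom (d + e) (p * q) s t = bhom d p s t * bhom e q s t"
proof (cases "s = 0")
  case True
  then show ?thesis by (simp add: hom_zs coeff_mult_bound[OF assms] power_add)
next
  case False
  have "degree (p * q) \<le> d + e" using assms degree_mult_le[of p q] by linarith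
  then show ?thesis using False assms by (simp add: hom_nz poly_mult power_add)
qed

lemma degree_pow_le1: "degree (p::complex poly) \<le> 1 \<Longrightarrow> degree (p ^ m) \<le> m"
  using degree_power_le[of p m] by (metis dual_order.trans mult.commute mult_le_mono2 nat_mult_1_right)

lemma hom_pow: assumes "degree p \<le> 1" shows "bhom m (p ^ m) s t = (bhom 1 p s t)^m"
proof (induction m)
  case 0
  then show ?case by (simp add: bhom_def)
next
  case (Suc m)
  have "bhom (1 + m) (p * p^m) s t = bhom 1 p s t * bhom m (p^m) s t"
    by (rule hom_mult[OF assms degree_pow_le1[OF assms]])
  then show ?case using Suc by simp
qed

lemma hom_lin: "bhom 1 p s t = coeff p 0 * s + coeff p 1 * t"
  by (simp add: bhom_def)

lemma hom_one: "bhom e 1 s t = s^e"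
proof -
  have "bhom e 1 s t = (\<Sum>i\<le>e. if i = 0 then s^e else 0)"
    unfolding bhom_def by (rule sum.cong) (auto simp: coeff_1)
  then show ?thesis by simp
qed

lemma hom_monom: "bhom e (monom 1 e) s t = t^e"
proof -
  have "bhom e (monom 1 e) s t = (\<Sum>i\<le>e. if i = e then t^e else 0)"
    unfolding bhom_def by (rule sum.cong) (auto simp: coeff_monom)
  then show ?thesis by simp
qed

lemma hom_poly: "degree p \<le> d \<Longrightarrow> bhom d p 1 x = poly p x"
  by (simp add: hom_nz)

definition psubst :: "nat \<Rightarrow> complex poly \<Rightarrow> complex poly \<Rightarrow> complex poly \<Rightarrow> complex poly" where
  "psubst d g l1 l2 = (\<Sum>i\<le>d. smult (coeff g i) (l1^(d-i) * l2^i))"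

lemma hom_psubst: assumes "degree l1 \<le> 1" "degree l2 \<le> 1"
  shows "bhom d (psubst d g l1 l2) s t = bhom d g (bhom 1 l1 s t) (bhom 1 l2 s t)"
proof -
  have "bhom d (psubst d g l1 l2) s t = (\<Sum>i\<le>d. coeff g i * bhom d (l1^(d-i) * l2^i) s t)"
    unfolding psubst_def hom_sum hom_smult ..
  also have "\<dots> = (\<Sum>i\<le>d. coeff g i * (bhom 1 l1 s t)^(d-i) * (bhom 1 l2 s t)^i)"
  proof (rule sum.cong)
    fix i assume "i \<in> {..d}"
    then have "d = (d - i) + i" by simp
    then have "bhom d (l1^(d-i) * l2^i) s t = bhom (d-i) (l1^(d-i)) s t * bhom i (l2^i) s t"
      using hom_mult[OF degree_pow_le1[OF assms(1)] degree_pow_le1[OF assms(2)], of "d-i" i s t]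
      by simp
    then show "coeff g i * bhom d (l1^(d-i) * l2^i) s t = coeff g i * (bhom 1 l1 s t)^(d-i) * (bhom 1 l2 s t)^i"
      using hom_pow[OF assms(1)] hom_pow[OF assms(2)] by simp
  qed simp
  finally show ?thesis unfolding bhom_def by simp
qed

lemma degree_psubst: assumes "degree l1 \<le> 1" "degree l2 \<le> 1"
  shows "degree (psubst d g l1 l2) \<le> d"
  unfolding psubst_def
proof (rule degree_sum_le)
  fix i assume "i \<in> {..d}"
  have "degree (l1^(d-i) * l2^i) \<le> d"
    using degree_mult_le[of "l1^(d-i)" "l2^i"] degree_pow_le1[OF assms(1), of "d-i"]
      degree_pow_le1[OF assms(2), of i] \<open>i \<in> {..d}\<close> by auto
  then show "degree (smult (coeff g i) (l1 ^ (d - i) * l2 ^ i)) \<le> d"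
    using degree_smult_le order_trans by blast
qed simp

lemma psubst_0[simp]: "psubst d 0 l1 l2 = 0"
  by (simp add: psubst_def)


definition nu :: "nat \<Rightarrow> complex \<Rightarrow> complex \<Rightarrow> complex vec" where
  "nu k s t = vec (k+1) (\<lambda>i. s^(k-i) * t^i)"

definition rowp :: "complex mat \<Rightarrow> nat \<Rightarrow> nat \<Rightarrow> complex poly" where
  "rowp N k r = (\<Sum>j\<le>k. monom (N $$ (r,j)) j)"

lemma coeff_rowp: "coeff (rowp N k r) j = (if j \<le> k then N $$ (r,j) else 0)"
proof -
  have "coeff (rowp N k r) j = (\<Sum>i\<le>k. if j = i then N $$ (r,i) else 0)"
    unfolding rowp_def coeff_sum by (rule sum.cong) (auto simp: coeff_monom)
  then show ?thesis by (simp add: sum.delta)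
qed

lemma degree_rowp: "degree (rowp N k r) \<le> k"
  unfolding rowp_def
  by (rule degree_sum_le) (auto intro: order_trans[OF degree_monom_le])

lemma N_nu: assumes "N \<in> carrier_mat m (k+1)" "r < m"
  shows "(N *\<^sub>v nu k s t) $ r = bhom k (rowp N k r) s t"
proof -
  have "(N *\<^sub>v nu k s t) $ r = (\<Sum>j\<in>{0..<k+1}. N $$ (r,j) * (s^(k-j) * t^j))"
    using assms by (simp add: scalar_prod_def nu_def)
  also have "\<dots> = (\<Sum>j\<le>k. coeff (rowp N k r) j * s^(k-j) * t^j)"
    by (rule sum.cong) (auto simp: coeff_rowp atLeast0LessThan lessThan_Suc_atMost)
  finally show ?thesis unfolding bhom_def .
qed

lemma rowp_zero_imp: assumes "N \<in> carrier_mat m (k+1)" "\<forall>r<m. rowp N k r = 0"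
  shows "N *\<^sub>v unit_vec (k+1) 0 = 0\<^sub>v m"
proof (rule eq_vecI)
  fix r assume "r < dim_vec (0\<^sub>v m)"
  then have r: "r < m" by simp
  have "N $$ (r,0) = coeff (rowp N k r) 0" by (simp add: coeff_rowp)
  then have z: "N $$ (r,0) = 0" using assms r by simp
  have "(N *\<^sub>v unit_vec (k+1) 0) $ r = (\<Sum>i\<in>{0..<k+1}. N $$ (r,i) * (if i = 0 then 1 else 0))"
    using assms r by (simp add: scalar_prod_def unit_vec_def)
  also have "\<dots> = (\<Sum>i\<in>{0..<k+1}. if i = 0 then N $$ (r,i) else 0)"
    by (rule sum.cong) auto
  also have "\<dots> = N $$ (r,0)" by (subst sum.delta) auto
  finally show "(N *\<^sub>v unit_vec (k + 1) 0) $ r = 0\<^sub>v m $ r" using z r by simp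
qed (use assms in simp)

lemma units_inv: assumes A: "(A :: complex mat) \<in> carrier_mat n n"
  and inj: "\<forall>v\<in>carrier_vec n. A *\<^sub>v v = 0\<^sub>v n \<longrightarrow> v = 0\<^sub>v n"
  shows "\<exists>Ai\<in>carrier_mat n n. A * Ai = 1\<^sub>m n \<and> Ai * A = 1\<^sub>m n"
proof -
  have "det A \<noteq> 0" using det_0_iff_vec_prod_zero[OF A] inj by auto
  from det_non_zero_imp_unit[OF A this, of undefined]
  show ?thesis unfolding Units_def ring_mat_def by auto
qed

lemma rank_lemma: assumes N: "N \<in> carrier_mat m (k+1)"
  and rows: "\<forall>r<m. rowp N k r = (\<Sum>l<M. smult (\<gamma> r l) (P l))"
  and M: "M \<le> k"
  shows "\<exists>w\<in>carrier_vec (k+1). w \<noteq> 0\<^sub>v (k+1) \<and> N *\<^sub>v w = 0\<^sub>v m"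
proof -
  define V where "V = mat (k+1) (k+1) (\<lambda>(l,j). if l < M then coeff (P l) j else 0)"
  have V: "V \<in> carrier_mat (k+1) (k+1)" unfolding V_def by simp
  have VT: "transpose_mat V \<in> carrier_mat (k+1) (k+1)" using V by simp
  have "transpose_mat V *\<^sub>v unit_vec (k+1) k = 0\<^sub>v (k+1)"
  proof (rule eq_vecI)
    fix j assume "j < dim_vec (0\<^sub>v (k+1))"
    then have j: "j < k+1" by simp
    have "(transpose_mat V *\<^sub>v unit_vec (k+1) k) $ j = (\<Sum>i\<in>{0..<k+1}. V $$ (i,j) * (if i = k then 1 else 0))"
      using j V by (simp add: scalar_prod_def unit_vec_def)
    also have "\<dots> = V $$ (k,j)" by (simp add: sum.delta' cong: if_cong)
    also have "\<dots> = 0" using j M unfolding V_def by simp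
    finally show "(transpose_mat V *\<^sub>v unit_vec (k+1) k) $ j = 0\<^sub>v (k+1) $ j" using j by simp
  qed (use V in simp)
  moreover have "unit_vec (k+1) k \<noteq> 0\<^sub>v (k+1)"
    by (metis index_unit_vec(1) index_zero_vec(1) less_add_one zero_neq_one)
  ultimately have "det (transpose_mat V) = 0"
    using det_0_iff_vec_prod_zero[OF VT] unit_vec_carrier by blast
  then have "det V = 0" using det_transpose[OF V] by simp
  then obtain w where w: "w \<in> carrier_vec (k+1)" "w \<noteq> 0\<^sub>v (k+1)" "V *\<^sub>v w = 0\<^sub>v (k+1)"
    using det_0_iff_vec_prod_zero[OF V] by blast
  have Vw: "(\<Sum>j<k+1. coeff (P l) j * w $ j) = 0" if "l < M" for l
  proof -
    have "(V *\<^sub>v w) $ l = 0" using w(3) that M by simp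
    then show ?thesis using that M w(1) V unfolding V_def
      by (simp add: scalar_prod_def atLeast0LessThan)
  qed
  have "N *\<^sub>v w = 0\<^sub>v m"
  proof (rule eq_vecI)
    fix r assume "r < dim_vec (0\<^sub>v m)"
    then have r: "r < m" by simp
    have "(N *\<^sub>v w) $ r = (\<Sum>j<k+1. coeff (rowp N k r) j * w $ j)"
      using N r w(1) by (simp add: scalar_prod_def atLeast0LessThan coeff_rowp)
    also have "\<dots> = (\<Sum>j<k+1. (\<Sum>l<M. \<gamma> r l * coeff (P l) j) * w $ j)"
      using rows r by (simp add: coeff_sum)
    also have "\<dots> = (\<Sum>j<k+1. \<Sum>l<M. \<gamma> r l * (coeff (P l) j * w $ j))"
      by (simp only: sum_distrib_right mult.assoc)
    also have "\<dots> = (\<Sum>l<M. \<Sum>j<k+1. \<gamma> r l * (coeff (P l) j * w $ j))"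
      by (rule sum.swap)
    also have "\<dots> = (\<Sum>l<M. \<gamma> r l * (\<Sum>j<k+1. coeff (P l) j * w $ j))"
      by (simp only: sum_distrib_left)
    also have "\<dots> = 0" using Vw by simp
    finally show "(N *\<^sub>v w) $ r = 0\<^sub>v m $ r" using r by simp
  qed (use N in simp)
  then show ?thesis using w by blast
qed

lemma vander: assumes c: "c \<in> carrier_vec (k+1)"
  and h: "\<forall>j\<le>k. (\<Sum>l<k+1. c $ l * of_nat l ^ j) = (0::complex)"
  shows "c = 0\<^sub>v (k+1)"
proof (rule eq_vecI)
  have gen: "(\<Sum>l<k+1. c $ l * poly p (of_nat l)) = 0" if "degree p \<le> k" for p
  proof -
    have "(\<Sum>l<k+1. c $ l * poly p (of_nat l)) = (\<Sum>l<k+1. (\<Sum>j\<le>k. coeff p j * (c $ l * of_nat l ^ j)))"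
      by (rule sum.cong) (auto simp: poly_ext_sum[OF that] sum_distrib_left algebra_simps)
    also have "\<dots> = (\<Sum>j\<le>k. \<Sum>l<k+1. coeff p j * (c $ l * of_nat l ^ j))"
      by (rule sum.swap)
    also have "\<dots> = (\<Sum>j\<le>k. coeff p j * (\<Sum>l<k+1. c $ l * of_nat l ^ j))"
      by (simp only: sum_distrib_left)
    also have "\<dots> = 0" using h by simp
    finally show ?thesis .
  qed
  fix l0 assume "l0 < dim_vec (0\<^sub>v (k+1))"
  then have l0: "l0 < k+1" by simp
  define S where "S = {0..<k+1} - {l0}"
  define p where "p = (\<Prod>l\<in>S. [:- of_nat l, 1:] :: complex poly)"
  have "degree p \<le> sum (degree \<circ> (\<lambda>l. [:- of_nat l, 1::complex:])) S"
    unfolding p_def by (rule degree_prod_sum_le) (simp add: S_def)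
  also have "\<dots> = card S" by simp
  also have "\<dots> = k" using l0 by (simp add: S_def)
  finally have dp: "degree p \<le> k" .
  have pl: "poly p (of_nat l) = 0" if "l < k+1" "l \<noteq> l0" for l
  proof -
    have "l \<in> S" using that by (simp add: S_def)
    then show ?thesis unfolding p_def poly_prod by (intro prod_zero) (auto simp: S_def)
  qed
  have pl0: "poly p (of_nat l0) \<noteq> 0"
    unfolding p_def poly_prod by (subst prod_zero_iff) (auto simp: S_def)
  have "(\<Sum>l<k+1. c $ l * poly p (of_nat l)) = (\<Sum>l<k+1. if l = l0 then c $ l0 * poly p (of_nat l0) else 0)"
    by (rule sum.cong) (auto simp: pl)
  also have "\<dots> = c $ l0 * poly p (of_nat l0)" using l0 by simp
  finally have "c $ l0 * poly p (of_nat l0) = 0" using gen[OF dp] by simp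
  then show "c $ l0 = 0\<^sub>v (k+1) $ l0" using pl0 l0 by simp
qed (use c in simp)


lemma chain:
  fixes Z :: "nat \<Rightarrow> complex poly"
  assumes cop: "coprime s t" and h: "\<forall>i<m. Z i * t = Z (Suc i) * s"
  shows "\<exists>f. \<forall>i\<le>m. Z i = f * s^(m-i) * t^i"
  using h
proof (induction m arbitrary: Z)
  case 0
  then show ?case by (intro exI[of _ "Z 0"]) simp
next
  case (Suc m)
  have "\<forall>i<m. Z (Suc i) * t = Z (Suc (Suc i)) * s" using Suc.prems by simp
  from Suc.IH[OF this] obtain f' where f': "\<forall>i\<le>m. Z (Suc i) = f' * s^(m-i) * t^i" by blast
  have Z1: "Z 1 = f' * s^m" using f' by (metis One_nat_def diff_zero le0 mult.right_neutral power_0)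
  have e0: "Z 0 * t = f' * s^(Suc m)" using Suc.prems Z1 by (simp add: algebra_simps)
  have copts: "coprime t s" using cop by (simp only: coprime_commute)
  have cop2: "coprime t (s^(Suc m))" using coprime_power_right_iff[of t s "Suc m"] copts by blast
  have "t dvd Z 0 * t" by simp
  then have "t dvd f' * s^(Suc m)" using e0 by simp
  then have "t dvd f'" using cop2 coprime_dvd_mult_left_iff by blast
  then obtain f where f: "f' = t * f" by blast
  show ?case
  proof (cases "t = 0")
    case True
    then have us: "is_unit s" using cop by simp
    then have "is_unit (s^(Suc m))" by (simp add: is_unit_power_iff)
    then have "s^(Suc m) dvd Z 0" by (rule unit_imp_dvd)
    then have Z0: "Z 0 = (Z 0 div s^(Suc m)) * s^(Suc m)" by simp
    show ?thesis
    proof (intro exI[of _ "Z 0 div s^(Suc m)"] allI impI)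
      fix i assume i: "i \<le> Suc m"
      show "Z i = Z 0 div s ^ Suc m * s ^ (Suc m - i) * t ^ i"
      proof (cases i)
        case 0 then show ?thesis using Z0 by simp
      next
        case (Suc j)
        then have "Z i = f' * s^(m-j) * t^j" using f' i by simp
        then show ?thesis using f True Suc by simp
      qed
    qed
  next
    case False
    have "Z 0 * t = (f * s^(Suc m)) * t" using e0 f by (simp add: algebra_simps)
    then have Z0: "Z 0 = f * s^(Suc m)" using False by simp
    show ?thesis
    proof (intro exI[of _ f] allI impI)
      fix i assume i: "i \<le> Suc m"
      show "Z i = f * s ^ (Suc m - i) * t ^ i"
      proof (cases i)
        case 0 then show ?thesis using Z0 by simp
      next
        case (Suc j)
        then have "Z i = f' * s^(m-j) * t^j" using f' i by simp
        then show ?thesis using f Suc by (simp add: algebra_simps)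
      qed
    qed
  qed
qed

lemma sum_split_ab: "(\<Sum>r<(a::nat)+b+2. (F r::complex)) = (\<Sum>i\<le>a. F i) + (\<Sum>j\<le>b. F (a+1+j))"
proof (induction b)
  case 0
  then show ?case by (simp add: lessThan_Suc_atMost[symmetric])
next
  case (Suc b)
  have "(\<Sum>r<a+Suc b+2. F r) = (\<Sum>r<a+b+2. F r) + F (a+b+2)" by simp
  then show ?case using Suc by (simp add: add.assoc)
qed

lemma sp_index: "r < a+b+2 \<Longrightarrow> scroll_param a b s t u v $ r =
  (if r \<le> a then u * s ^ (a - r) * t ^ r else v * s ^ (b - (r - a - 1)) * t ^ (r - a - 1))"
  by (simp add: scroll_param_def)

lemma sp_dim[simp]: "dim_vec (scroll_param a b s t u v) = a+b+2"
  by (simp add: scroll_param_def)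

lemma sp_carrier: "scroll_param a b s t u v \<in> carrier_vec (a+b+2)"
  by (rule carrier_vecI) simp

lemma dot_sp: assumes "h \<in> carrier_vec (a+b+2)"
  shows "h \<bullet> scroll_param a b x y u v =
    u * (\<Sum>i\<le>a. h $ i * x^(a-i) * y^i) + v * (\<Sum>j\<le>b. h $ (a+1+j) * x^(b-j) * y^j)"
proof -
  have "h \<bullet> scroll_param a b x y u v = (\<Sum>r<a+b+2. h $ r * scroll_param a b x y u v $ r)"
    by (simp add: scalar_prod_def atLeast0LessThan)
  also have "\<dots> = (\<Sum>i\<le>a. h $ i * scroll_param a b x y u v $ i) +
      (\<Sum>j\<le>b. h $ (a+1+j) * scroll_param a b x y u v $ (a+1+j))"
    by (rule sum_split_ab)
  also have "\<dots> = (\<Sum>i\<le>a. u * (h $ i * x^(a-i) * y^i)) + (\<Sum>j\<le>b. v * (h $ (a+1+j) * x^(b-j) * y^j))"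
    by (intro arg_cong2[where f="(+)"] sum.cong) (auto simp: sp_index)
  also have "\<dots> = u * (\<Sum>i\<le>a. h $ i * x^(a-i) * y^i) + v * (\<Sum>j\<le>b. h $ (a+1+j) * x^(b-j) * y^j)"
    by (simp only: sum_distrib_left)
  finally show ?thesis .
qed

lemma sp_smult: "scroll_param a b x y (m*u) (m*v) = m \<cdot>\<^sub>v scroll_param a b x y u v"
proof (rule eq_vecI)
  fix i assume "i < dim_vec (m \<cdot>\<^sub>v scroll_param a b x y u v)"
  then have i: "i < a+b+2" by simp
  show "scroll_param a b x y (m*u) (m*v) $ i = (m \<cdot>\<^sub>v scroll_param a b x y u v) $ i"
    using i by (simp add: sp_index mult.assoc)
qed simp

lemma sp_zero: "scroll_param a b x y 0 0 = 0\<^sub>v (a+b+2)"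
proof (rule eq_vecI)
  fix i assume "i < dim_vec (0\<^sub>v (a+b+2))"
  then have i: "i < a+b+2" by simp
  show "scroll_param a b x y 0 0 $ i = 0\<^sub>v (a+b+2) $ i"
    using i by (simp add: sp_index)
qed simp

lemma sp_kappa: assumes "r < a+b+1" "r \<noteq> a"
  shows "\<exists>\<kappa>. (c \<cdot>\<^sub>v scroll_param a b s t u v) $ r = \<kappa> * s \<and>
              (c \<cdot>\<^sub>v scroll_param a b s t u v) $ (r+1) = \<kappa> * t"
proof (cases "r < a")
  case True
  have e: "s^(a-r) = s^(a-r-1) * s" using True
    by (metis Suc_diff_Suc diff_Suc_1 power_Suc2 zero_less_diff)
  have r1: "(c \<cdot>\<^sub>v scroll_param a b s t u v) $ r = c * (u * s^(a-r) * t^r)"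
    using True by (simp add: sp_index)
  have r2: "(c \<cdot>\<^sub>v scroll_param a b s t u v) $ (r+1) = c * (u * s^(a-r-1) * t^(Suc r))"
    using True by (simp add: sp_index)
  show ?thesis
  proof (intro exI conjI)
    show "(c \<cdot>\<^sub>v scroll_param a b s t u v) $ r = (c*u*s^(a-r-1)*t^r) * s"
      unfolding r1 e by (simp add: algebra_simps)
    show "(c \<cdot>\<^sub>v scroll_param a b s t u v) $ (r+1) = (c*u*s^(a-r-1)*t^r) * t"
      unfolding r2 by (simp add: algebra_simps)
  qed
next
  case False
  then have r: "a < r" using assms by simp
  define j where "j = r - a - 1"
  have j: "j < b" "r = a+1+j" using r assms unfolding j_def by auto
  have e: "s^(b-j) = s^(b-j-1) * s" using j
    by (metis Suc_diff_Suc diff_Suc_1 power_Suc2 zero_less_diff)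
  have r1: "(c \<cdot>\<^sub>v scroll_param a b s t u v) $ r = c * (v * s^(b-j) * t^j)"
    using j by (simp add: sp_index)
  have r2: "(c \<cdot>\<^sub>v scroll_param a b s t u v) $ (r+1) = c * (v * s^(b-j-1) * t^(Suc j))"
    using j by (simp add: sp_index)
  show ?thesis
  proof (intro exI conjI)
    show "(c \<cdot>\<^sub>v scroll_param a b s t u v) $ r = (c*v*s^(b-j-1)*t^j) * s"
      unfolding r1 e by (simp add: algebra_simps)
    show "(c \<cdot>\<^sub>v scroll_param a b s t u v) $ (r+1) = (c*v*s^(b-j-1)*t^j) * t"
      unfolding r2 by (simp add: algebra_simps)
  qed
qed

lemma sp_minor: assumes "r < a+b+1" "r \<noteq> a" "r' < a+b+1" "r' \<noteq> a"
  and "x = c \<cdot>\<^sub>v scroll_param a b s t u v"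
  shows "x $ r * x $ (r'+1) = x $ (r+1) * x $ r'"
proof -
  obtain k1 where 1: "x $ r = k1 * s" "x $ (r+1) = k1 * t" using sp_kappa[OF assms(1,2)] assms(5) by blast
  obtain k2 where 2: "x $ r' = k2 * s" "x $ (r'+1) = k2 * t" using sp_kappa[OF assms(3,4)] assms(5) by blast
  show ?thesis unfolding 1 2 by simp
qed

lemma scroll_cone_minor: assumes "x \<in> scroll_cone a b"
  "r < a+b+1" "r \<noteq> a" "r' < a+b+1" "r' \<noteq> a"
  shows "x $ r * x $ (r'+1) = x $ (r+1) * x $ r'"
proof -
  obtain c y where "x = c \<cdot>\<^sub>v y" "y \<in> {scroll_param a b s t u v | s t u v. (s, t) \<noteq> (0, 0) \<and> (u, v) \<noteq> (0, 0)}"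
    using assms(1) unfolding scroll_cone_def proj_cone_def by blast
  then obtain s t u v where "x = c \<cdot>\<^sub>v scroll_param a b s t u v" by blast
  then show ?thesis using sp_minor assms(2-5) by blast
qed


lemma rank_lemma2: assumes N: "N \<in> carrier_mat m (k+1)"
  and rows: "\<forall>r<m. \<exists>l<M. \<exists>\<kappa>. rowp N k r = smult \<kappa> (P l)"
  and M: "M \<le> k"
  shows "\<exists>w\<in>carrier_vec (k+1). w \<noteq> 0\<^sub>v (k+1) \<and> N *\<^sub>v w = 0\<^sub>v m"
proof -
  have "\<forall>r. \<exists>lk. r < m \<longrightarrow> fst lk < M \<and> rowp N k r = smult (snd lk) (P (fst lk))"
    using rows by (metis fst_conv snd_conv)
  then obtain LK where LK: "\<forall>r. r < m \<longrightarrow> fst (LK r) < M \<and> rowp N k r = smult (snd (LK r)) (P (fst (LK r)))"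
    by metis
  define \<gamma> where "\<gamma> r l = (if l = fst (LK r) then snd (LK r) else 0)" for r l
  have "\<forall>r<m. rowp N k r = (\<Sum>l<M. smult (\<gamma> r l) (P l))"
  proof (intro allI impI)
    fix r assume r: "r < m"
    have "(\<Sum>l<M. smult (\<gamma> r l) (P l)) = (\<Sum>l<M. if l = fst (LK r) then smult (snd (LK r)) (P l) else 0)"
      by (rule sum.cong) (auto simp: \<gamma>_def)
    also have "\<dots> = smult (snd (LK r)) (P (fst (LK r)))"
      using LK r by (subst sum.delta) auto
    finally show "rowp N k r = (\<Sum>l<M. smult (\<gamma> r l) (P l))" using LK r by simp
  qed
  from rank_lemma[OF N this M] show ?thesis .
qed

lemma nu_carrier: "nu k s t \<in> carrier_vec (k+1)"
  by (simp add: nu_def)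

lemma nu_nz: assumes "(s,t) \<noteq> (0,0)" shows "nu k s t \<noteq> 0\<^sub>v (k+1)"
proof
  assume h: "nu k s t = 0\<^sub>v (k+1)"
  show False
  proof (cases "s = 0")
    case False
    have "nu k s t $ 0 = s^k" by (simp add: nu_def)
    moreover have "nu k s t $ 0 = 0" using h by simp
    ultimately show False using False by simp
  next
    case True
    then have t: "t \<noteq> 0" using assms by simp
    have "nu k s t $ k = t^k" by (simp add: nu_def)
    moreover have "nu k s t $ k = 0" using h by simp
    ultimately show False using t by simp
  qed
qed

lemma dual_zero: assumes h: "h \<in> carrier_vec m" and N: "N \<in> carrier_mat m (k+1)"
  and z: "\<forall>x. h \<bullet> (N *\<^sub>v nu k 1 x) = 0" and w: "w \<in> carrier_vec (k+1)"
  shows "h \<bullet> (N *\<^sub>v w) = 0"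
proof -
  define R where "R = (\<Sum>r<m. smult (h $ r) (rowp N k r))"
  have "poly R x = 0" for x
  proof -
    have "poly R x = (\<Sum>r<m. h $ r * poly (rowp N k r) x)"
      unfolding R_def by (simp add: poly_sum)
    also have "\<dots> = (\<Sum>r<m. h $ r * (N *\<^sub>v nu k 1 x) $ r)"
    proof (rule sum.cong)
      fix r assume "r \<in> {..<m}"
      then have r: "r < m" by simp
      have "(N *\<^sub>v nu k 1 x) $ r = poly (rowp N k r) x"
        using N_nu[OF N r, of 1 x] hom_poly[OF degree_rowp] by simp
      then show "h $ r * poly (rowp N k r) x = h $ r * (N *\<^sub>v nu k 1 x) $ r" by simp
    qed simp
    also have "\<dots> = h \<bullet> (N *\<^sub>v nu k 1 x)"
      using N by (simp add: scalar_prod_def atLeast0LessThan)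
    finally show ?thesis using z by simp
  qed
  then have R0: "R = 0" using poly_all_0_iff_0 by blast
  have cR: "coeff R j = (\<Sum>r<m. h $ r * N $$ (r,j))" if "j \<le> k" for j
    unfolding R_def using that by (simp add: coeff_sum coeff_rowp)
  have "h \<bullet> (N *\<^sub>v w) = (\<Sum>r<m. h $ r * (\<Sum>j<k+1. N $$ (r,j) * w $ j))"
    using N w by (simp add: scalar_prod_def atLeast0LessThan)
  also have "\<dots> = (\<Sum>r<m. \<Sum>j<k+1. h $ r * N $$ (r,j) * w $ j)"
    by (simp only: sum_distrib_left mult.assoc)
  also have "\<dots> = (\<Sum>j<k+1. \<Sum>r<m. h $ r * N $$ (r,j) * w $ j)"
    by (rule sum.swap)
  also have "\<dots> = (\<Sum>j<k+1. coeff R j * w $ j)"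
    by (rule sum.cong) (auto simp: cR sum_distrib_right)
  also have "\<dots> = 0" using R0 by simp
  finally show ?thesis .
qed

lemma const_pow: "[:x:]^m = [:x^m::complex:]"
  by (induction m) auto

lemma const_mult: "f * [:x:]^m * [:y:]^l = smult (x^m * y^l::complex) f"
  apply (simp add: const_pow mult.commute[of f] mult.assoc)
  apply (simp add: mult.commute)
  done

lemma hom_fst: assumes s: "degree s \<le> 1" and t: "degree t \<le> 1"
  and f: "f = 0 \<or> degree f + a \<le> k" and i: "i \<le> a"
  shows "bhom k (f * s^(a-i) * t^i) x y = bhom (k-a) f x y * (bhom 1 s x y)^(a-i) * (bhom 1 t x y)^i"
proof (cases "f = 0")
  case False
  then have fa: "degree f + a \<le> k" using f by simp
  then have kk: "k = ((k-a) + (a-i)) + i" using i by simp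
  have d1: "degree f \<le> k - a" using fa by simp
  have d2: "degree (f * s^(a-i)) \<le> (k-a) + (a-i)"
    using degree_mult_le[of f "s^(a-i)"] degree_pow_le1[OF s, of "a-i"] d1 by linarith
  have "bhom k (f * s^(a-i) * t^i) x y = bhom (((k-a) + (a-i)) + i) (f * s^(a-i) * t^i) x y"
    using kk by simp
  also have "\<dots> = bhom ((k-a) + (a-i)) (f * s^(a-i)) x y * bhom i (t^i) x y"
    by (rule hom_mult[OF d2 degree_pow_le1[OF t]])
  also have "\<dots> = bhom (k-a) f x y * bhom (a-i) (s^(a-i)) x y * bhom i (t^i) x y"
    using hom_mult[OF d1 degree_pow_le1[OF s, of "a-i"]] by simp
  finally show ?thesis using hom_pow[OF s] hom_pow[OF t] by simp
qed simp

lemma degree_fq: assumes "q \<noteq> 0" "(f::complex poly) \<noteq> 0" shows "degree (f * q^m) = degree f + m * degree q"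
  using assms by (simp add: degree_mult_eq degree_power_eq)


locale setting =
  fixes a b k :: nat and N :: "complex mat"
  assumes a1: "1 \<le> a" and b1: "1 \<le> b" and k2: "2 \<le> k" and kab: "k \<le> a+b"
    and N: "N \<in> carrier_mat (a+b+2) (k+1)"
    and inj: "\<forall>w\<in>carrier_vec (k+1). N *\<^sub>v w = 0\<^sub>v (a+b+2) \<longrightarrow> w = 0\<^sub>v (k+1)"
    and curve: "\<forall>s t. (s,t) \<noteq> (0,0) \<longrightarrow> N *\<^sub>v nu k s t \<in> scroll_cone a b"
begin

abbreviation X where "X r \<equiv> rowp N k r"

lemma noninj: assumes "\<exists>w\<in>carrier_vec (k+1). w \<noteq> 0\<^sub>v (k+1) \<and> N *\<^sub>v w = 0\<^sub>v (a+b+2)"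
  shows False
  using assms inj by blast

lemma Xpoly: assumes "r < a+b+2" shows "poly (X r) x = (N *\<^sub>v nu k 1 x) $ r"
  using N_nu[OF N assms, of 1 x] hom_poly[OF degree_rowp] by simp

lemma minor: assumes "r < a+b+1" "r \<noteq> a" "r' < a+b+1" "r' \<noteq> a"
  shows "X r * X (r'+1) = X (r+1) * X r'"
proof -
  have "poly (X r * X (r'+1)) x = poly (X (r+1) * X r') x" for x
  proof -
    have c: "N *\<^sub>v nu k 1 x \<in> scroll_cone a b" using curve by simp
    have e: "(N *\<^sub>v nu k 1 x) $ r * (N *\<^sub>v nu k 1 x) $ (r'+1) = (N *\<^sub>v nu k 1 x) $ (r+1) * (N *\<^sub>v nu k 1 x) $ r'"
      by (rule scroll_cone_minor[OF c assms])
    have "r < a+b+2" "r'+1 < a+b+2" "r+1 < a+b+2" "r' < a+b+2" using assms by auto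
    then show ?thesis using e by (simp only: poly_mult Xpoly)
  qed
  then have "poly (X r * X (r'+1)) = poly (X (r+1) * X r')" by (rule ext)
  then show ?thesis by (simp only: poly_eq_poly_eq_iff)
qed

lemma ex_r0: "\<exists>r0. r0 < a+b+1 \<and> r0 \<noteq> a \<and> (X r0 \<noteq> 0 \<or> X (r0+1) \<noteq> 0)"
proof (rule ccontr)
  assume c: "\<not> ?thesis"
  have "\<forall>r<a+b+2. X r = 0"
  proof (intro allI impI)
    fix r assume r: "r < a+b+2"
    show "X r = 0"
    proof (cases "r < a+b+1 \<and> r \<noteq> a")
      case True then show ?thesis using c by blast
    next
      case False
      then have "r = a \<or> r = a+b+1" using r by auto
      then show ?thesis
      proof
        assume ra: "r = a"
        have "a - 1 < a+b+1" "a - 1 \<noteq> a" using a1 by auto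
        then have "X (a-1+1) = 0" using c by blast
        then show ?thesis using ra a1 by simp
      next
        assume ra: "r = a+b+1"
        have "a + b < a+b+1" "a + b \<noteq> a" using b1 by auto
        then have "X (a+b+1) = 0" using c by blast
        then show ?thesis using ra by simp
      qed
    qed
  qed
  then have "N *\<^sub>v unit_vec (k+1) 0 = 0\<^sub>v (a+b+2)" by (rule rowp_zero_imp[OF N])
  moreover have "unit_vec (k+1) 0 \<noteq> 0\<^sub>v (k+1)"
  proof
    assume "unit_vec (k+1) 0 = 0\<^sub>v (k+1)"
    then have "unit_vec (k+1) 0 $ 0 = 0\<^sub>v (k+1) $ 0" by simp
    then show False by simp
  qed
  ultimately have "\<exists>w\<in>carrier_vec (k+1). w \<noteq> 0\<^sub>v (k+1) \<and> N *\<^sub>v w = 0\<^sub>v (a+b+2)"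
    using unit_vec_carrier by blast
  then show False by (rule noninj)
qed

lemma struct_thm: "\<exists>s t f g. coprime s t \<and> (\<forall>i\<le>a. X i = f * s^(a-i) * t^i) \<and>
    (\<forall>j\<le>b. X (a+1+j) = g * s^(b-j) * t^j)"
proof -
  obtain r0 where r0: "r0 < a+b+1" "r0 \<noteq> a" "X r0 \<noteq> 0 \<or> X (r0+1) \<noteq> 0" using ex_r0 by blast
  define d where "d = gcd (X r0) (X (r0+1))"
  define s where "s = X r0 div d"
  define t where "t = X (r0+1) div d"
  have cop: "coprime s t" unfolding s_def t_def d_def using r0(3) by (rule div_gcd_coprime)
  have d0: "d \<noteq> 0" unfolding d_def using r0(3) by simp
  have Xs: "X r0 = s * d" unfolding s_def d_def by simp
  have Xt: "X (r0+1) = t * d" unfolding t_def d_def by simp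
  have rel: "X r * t = X (Suc r) * s" if "r < a+b+1" "r \<noteq> a" for r
  proof -
    have "X r0 * X (r+1) = X (r0+1) * X r" using minor[OF r0(1,2) that] .
    then have "d * (X (r+1) * s) = d * (X r * t)" unfolding Xs Xt by (simp add: algebra_simps)
    then show ?thesis using d0 by simp
  qed
  have "\<forall>i<a. X i * t = X (Suc i) * s" using rel by simp
  from chain[OF cop this] obtain f where f: "\<forall>i\<le>a. X i = f * s^(a-i) * t^i" by blast
  have "\<forall>j<b. X (a+1+j) * t = X (a+1+Suc j) * s"
  proof (intro allI impI)
    fix j assume "j < b"
    then have "a+1+j < a+b+1" "a+1+j \<noteq> a" by auto
    then have "X (a+1+j) * t = X (Suc (a+1+j)) * s" by (rule rel)
    then show "X (a+1+j) * t = X (a+1+Suc j) * s" by simp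
  qed
  from chain[OF cop this] obtain g where g: "\<forall>j\<le>b. X (a+1+j) = g * s^(b-j) * t^j" by blast
  show ?thesis using cop f g by blast
qed

lemma degX: "degree (X r) \<le> k" by (rule degree_rowp)

end

context setting begin

lemma degs: assumes cop: "coprime s t" and fX: "\<forall>i\<le>m. X (ofs+i) = f * s^(m-i) * t^i"
    and f0: "f \<noteq> 0"
  shows "degree f + m * degree s \<le> k \<and> degree f + m * degree t \<le> k"
proof -
  have X0: "X (ofs+0) = f * s^m" using fX[rule_format, of 0] by simp
  have Xa: "X (ofs+m) = f * t^m" using fX[rule_format, of m] by simp
  have A: "degree f + m * degree s \<le> k" if "s \<noteq> 0"
    using degree_fq[OF that f0, of m] X0 degX[of "ofs+0"] by simp
  have B: "degree f + m * degree t \<le> k" if "t \<noteq> 0"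
    using degree_fq[OF that f0, of m] Xa degX[of "ofs+m"] by simp
  have st: "s \<noteq> 0 \<or> t \<noteq> 0" using cop by auto
  show ?thesis
  proof (cases "s = 0")
    case True
    then have "t \<noteq> 0" using st by simp
    then show ?thesis using B True by simp
  next
    case False
    show ?thesis
    proof (cases "t = 0")
      case True then show ?thesis using A False by simp
    next
      case False then show ?thesis using A B \<open>s \<noteq> 0\<close> by simp
    qed
  qed
qed

lemma X_split: assumes "r < a+b+2" "\<not> r \<le> a"
  shows "r = a+1+(r-a-1)" "r - a - 1 \<le> b"
  using assms by auto

lemma alpha0_false: assumes cop: "coprime s t" and fX: "\<forall>i\<le>a. X i = f * s^(a-i) * t^i"
    and gX: "\<forall>j\<le>b. X (a+1+j) = g * s^(b-j) * t^j"
    and ds: "degree s = 0" and dt: "degree t = 0"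
  shows False
proof -
  define P where "P l = (if l = (0::nat) then f else g)" for l
  have se: "s = [:coeff s 0:]" using degree_0_id[OF ds] by simp
  have te: "t = [:coeff t 0:]" using degree_0_id[OF dt] by simp
  have "\<forall>r<a+b+2. \<exists>l<2. \<exists>\<kappa>. X r = smult \<kappa> (P l)"
  proof (intro allI impI)
    fix r assume r: "r < a+b+2"
    show "\<exists>l<2. \<exists>\<kappa>. X r = smult \<kappa> (P l)"
    proof (cases "r \<le> a")
      case True
      have "X r = f * [:coeff s 0:]^(a-r) * [:coeff t 0:]^r" using fX True se te by metis
      then have "X r = smult (coeff s 0^(a-r) * coeff t 0^r) (P 0)" by (simp add: const_mult P_def)
      then show ?thesis by (intro exI[of _ 0] conjI exI[of _ "coeff s 0^(a-r) * coeff t 0^r"]) auto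
    next
      case False
      note rr = X_split[OF r False]
      have "X r = g * [:coeff s 0:]^(b-(r-a-1)) * [:coeff t 0:]^(r-a-1)" using gX rr se te by metis
      then have "X r = smult (coeff s 0^(b-(r-a-1)) * coeff t 0^(r-a-1)) (P 1)" by (simp add: const_mult P_def)
      then show ?thesis by (intro exI[of _ 1] conjI exI[of _ "coeff s 0^(b-(r-a-1)) * coeff t 0^(r-a-1)"]) auto
    qed
  qed
  moreover have "2 \<le> k" using k2 .
  ultimately have "\<exists>w\<in>carrier_vec (k+1). w \<noteq> 0\<^sub>v (k+1) \<and> N *\<^sub>v w = 0\<^sub>v (a+b+2)"
    by (rule rank_lemma2[OF N])
  then show False by (rule noninj)
qed

lemma alpha2_false: assumes cop: "coprime s t" and fX: "\<forall>i\<le>a. X i = f * s^(a-i) * t^i"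
    and gX: "\<forall>j\<le>b. X (a+1+j) = g * s^(b-j) * t^j"
    and al: "2 \<le> max (degree s) (degree t)"
  shows False
proof (cases "f = 0")
  case False
  have df: "degree f + a * max (degree s) (degree t) \<le> k"
  proof -
    have fX': "\<forall>i\<le>a. X (0+i) = f * s^(a-i) * t^i" using fX by simp
    show ?thesis using degs[OF cop fX' False] by (simp add: max_def)
  qed
  have "a * 2 \<le> a * max (degree s) (degree t)" using al by (rule mult_le_mono2)
  then have df2: "degree f + 2 * a \<le> k" using df by linarith
  define P where "P l = f * s^(a-l) * t^l" for l
  show False
  proof (cases "g = 0")
    case True
    have "\<forall>r<a+b+2. \<exists>l<a+1. \<exists>\<kappa>. X r = smult \<kappa> (P l)"
    proof (intro allI impI)
      fix r assume r: "r < a+b+2"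
      show "\<exists>l<a+1. \<exists>\<kappa>. X r = smult \<kappa> (P l)"
      proof (cases "r \<le> a")
        case True
        then have "X r = smult 1 (P r)" using fX by (simp add: P_def)
        then show ?thesis using True by (intro exI[of _ r] conjI exI[of _ 1]) auto
      next
        case False
        note rr = X_split[OF r False]
        have "X r = 0" using gX rr \<open>g = 0\<close> by (metis mult_zero_left)
        then have "X r = smult 0 (P 0)" by simp
        then show ?thesis by (intro exI[of _ 0] conjI exI[of _ 0]) auto
      qed
    qed
    moreover have "a + 1 \<le> k" using df2 a1 by linarith
    ultimately have "\<exists>w\<in>carrier_vec (k+1). w \<noteq> 0\<^sub>v (k+1) \<and> N *\<^sub>v w = 0\<^sub>v (a+b+2)"
      by (rule rank_lemma2[OF N])
    then show False by (rule noninj)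
  next
    case gnz: False
    have dg: "degree g + b * max (degree s) (degree t) \<le> k"
      using degs[OF cop gX gnz] by (simp add: max_def)
    have "b * 2 \<le> b * max (degree s) (degree t)" using al by (rule mult_le_mono2)
    then have dg2: "degree g + 2 * b \<le> k" using dg by linarith
    have ab: "a = b" and df0: "degree f = 0" and dg0: "degree g = 0"
      using df2 dg2 kab by linarith+
    have fe: "f = [:coeff f 0:]" using degree_0_id[OF df0] by simp
    have ge: "g = [:coeff g 0:]" using degree_0_id[OF dg0] by simp
    have f00: "coeff f 0 \<noteq> 0" using False fe by auto
    define \<kappa> where "\<kappa> = coeff g 0 / coeff f 0"
    have gf: "g = smult \<kappa> f"
      using f00 unfolding \<kappa>_def by (subst ge, subst fe) simp
    have "\<forall>r<a+b+2. \<exists>l<a+1. \<exists>\<kappa>. X r = smult \<kappa> (P l)"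
    proof (intro allI impI)
      fix r assume r: "r < a+b+2"
      show "\<exists>l<a+1. \<exists>\<kappa>. X r = smult \<kappa> (P l)"
      proof (cases "r \<le> a")
        case True
        then have "X r = smult 1 (P r)" using fX by (simp add: P_def)
        then show ?thesis using True by (intro exI[of _ r] conjI exI[of _ 1]) auto
      next
        case False
        note rr = X_split[OF r False]
        have "X r = g * s^(b-(r-a-1)) * t^(r-a-1)" using gX rr by metis
        then have "X r = smult \<kappa> f * s^(b-(r-a-1)) * t^(r-a-1)" by (simp only: gf)
        then have "X r = smult \<kappa> (f * s^(a-(r-a-1)) * t^(r-a-1))" using ab by simp
        then have "X r = smult \<kappa> (P (r-a-1))" unfolding P_def .
        then show ?thesis using rr ab by (intro exI[of _ "r-a-1"] conjI exI[of _ \<kappa>]) auto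
      qed
    qed
    moreover have "a + 1 \<le> k" using df2 a1 by linarith
    ultimately have "\<exists>w\<in>carrier_vec (k+1). w \<noteq> 0\<^sub>v (k+1) \<and> N *\<^sub>v w = 0\<^sub>v (a+b+2)"
      by (rule rank_lemma2[OF N])
    then show False by (rule noninj)
  qed
next
  case True
  note f0 = True
  show False
  proof (cases "g = 0")
    case True
    have "\<forall>r<a+b+2. \<exists>l<1. \<exists>\<kappa>. X r = smult \<kappa> ((\<lambda>_::nat. 0) l)"
    proof (intro allI impI)
      fix r assume r: "r < a+b+2"
      have "X r = 0"
      proof (cases "r \<le> a")
        case True then show ?thesis using fX f0 by simp
      next
        case False
        note rr = X_split[OF r False]
        show ?thesis using gX rr \<open>g = 0\<close> by (metis mult_zero_left)
      qed
      then show "\<exists>l<1. \<exists>\<kappa>. X r = smult \<kappa> ((\<lambda>_::nat. 0) l)" by (intro exI[of _ "0::nat"]) simp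
    qed
    moreover have "1 \<le> k" using k2 by simp
    ultimately have "\<exists>w\<in>carrier_vec (k+1). w \<noteq> 0\<^sub>v (k+1) \<and> N *\<^sub>v w = 0\<^sub>v (a+b+2)"
      by (rule rank_lemma2[OF N])
    then show False by (rule noninj)
  next
    case gnz: False
    have dg: "degree g + b * max (degree s) (degree t) \<le> k"
      using degs[OF cop gX gnz] by (simp add: max_def)
    have "b * 2 \<le> b * max (degree s) (degree t)" using al by (rule mult_le_mono2)
    then have dg2: "degree g + 2 * b \<le> k" using dg by linarith
    define P where "P l = g * s^(b-l) * t^l" for l
    have "\<forall>r<a+b+2. \<exists>l<b+1. \<exists>\<kappa>. X r = smult \<kappa> (P l)"
    proof (intro allI impI)
      fix r assume r: "r < a+b+2"
      show "\<exists>l<b+1. \<exists>\<kappa>. X r = smult \<kappa> (P l)"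
      proof (cases "r \<le> a")
        case True
        then have "X r = smult 0 (P 0)" using fX f0 by simp
        then show ?thesis by (intro exI[of _ 0] conjI exI[of _ 0]) auto
      next
        case False
        note rr = X_split[OF r False]
        have "X r = smult 1 (P (r-a-1))" using gX rr unfolding P_def by (metis smult_1_left)
        then show ?thesis using rr by (intro exI[of _ "r-a-1"] conjI exI[of _ 1]) auto
      qed
    qed
    moreover have "b + 1 \<le> k" using dg2 b1 by linarith
    ultimately have "\<exists>w\<in>carrier_vec (k+1). w \<noteq> 0\<^sub>v (k+1) \<and> N *\<^sub>v w = 0\<^sub>v (a+b+2)"
      by (rule rank_lemma2[OF N])
    then show False by (rule noninj)
  qed
qed

end


lemma cr1: assumes D: "D = sa*tb - sb*ta" and D0: "D \<noteq> 0"
  shows "sa * ((tb*p1 - sb*p2)/D) + sb * ((sa*p2 - ta*p1)/D) = (p1::complex)"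
proof -
  have "sa * ((tb*p1 - sb*p2)/D) + sb * ((sa*p2 - ta*p1)/D) = (sa * (tb*p1 - sb*p2) + sb * (sa*p2 - ta*p1))/D"
    by (simp add: add_divide_distrib)
  also have "sa * (tb*p1 - sb*p2) + sb * (sa*p2 - ta*p1) = p1 * D" unfolding D by (simp add: algebra_simps)
  finally show ?thesis using D0 by simp
qed
lemma cr2: assumes D: "D = sa*tb - sb*ta" and D0: "D \<noteq> 0"
  shows "ta * ((tb*p1 - sb*p2)/D) + tb * ((sa*p2 - ta*p1)/D) = (p2::complex)"
proof -
  have "ta * ((tb*p1 - sb*p2)/D) + tb * ((sa*p2 - ta*p1)/D) = (ta * (tb*p1 - sb*p2) + tb * (sa*p2 - ta*p1))/D"
    by (simp add: add_divide_distrib)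
  also have "ta * (tb*p1 - sb*p2) + tb * (sa*p2 - ta*p1) = p2 * D" unfolding D by (simp add: algebra_simps)
  finally show ?thesis using D0 by simp
qed
lemma cr3: assumes D: "D = sa*tb - sb*ta" and D0: "D \<noteq> 0"
  shows "tb / D * (sa * x + sb * y) + - sb / D * (ta * x + tb * y) = (x::complex)"
proof -
  have "tb / D * (sa * x + sb * y) + - sb / D * (ta * x + tb * y) = (tb * (sa * x + sb * y) - sb * (ta * x + tb * y)) / D"
    by (simp add: diff_divide_distrib)
  also have "tb * (sa * x + sb * y) - sb * (ta * x + tb * y) = x * D" unfolding D by (simp add: algebra_simps)
  finally show ?thesis using D0 by simp
qed
lemma cr4: assumes D: "D = sa*tb - sb*ta" and D0: "D \<noteq> 0"
  shows "- ta / D * (sa * x + sb * y) + sa / D * (ta * x + tb * y) = (y::complex)"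
proof -
  have "- ta / D * (sa * x + sb * y) + sa / D * (ta * x + tb * y) = (sa * (ta * x + tb * y) - ta * (sa * x + sb * y)) / D"
    by (simp add: diff_divide_distrib)
  also have "sa * (ta * x + tb * y) - ta * (sa * x + sb * y) = y * D" unfolding D by (simp add: algebra_simps)
  finally show ?thesis using D0 by simp
qed
lemma cr5: "tb / D * p1 + - sb / D * p2 = (tb * p1 - sb * p2) / (D::complex)"
  by (simp add: diff_divide_distrib)
lemma cr6: "- ta / D * p1 + sa / D * p2 = (sa * p2 - ta * p1) / (D::complex)"
  by (simp add: diff_divide_distrib)

lemma lin_dvd: assumes ds: "degree (s::complex poly) = 1" and dt: "degree t \<le> 1"
  and D: "coeff s 0 * coeff t 1 - coeff s 1 * coeff t 0 = 0"
  shows "s dvd t"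
proof -
  have s0: "s \<noteq> 0" using ds by auto
  then have "coeff s (degree s) \<noteq> 0" by simp
  then have sb: "coeff s 1 \<noteq> 0" using ds by simp
  have "t = smult (coeff t 1 / coeff s 1) s"
  proof (rule poly_eqI)
    fix n
    show "coeff t n = coeff (smult (coeff t 1 / coeff s 1) s) n"
    proof (cases n)
      case 0
      have "coeff t 0 * coeff s 1 = coeff t 1 * coeff s 0" using D by (simp add: algebra_simps)
      then show ?thesis using 0 sb by (simp add: field_simps)
    next
      case (Suc m)
      show ?thesis
      proof (cases m)
        case 0 then show ?thesis using Suc sb by simp
      next
        case (Suc m')
        then have "coeff t n = 0" "coeff s n = 0" using \<open>n = Suc m\<close> ds dt by (auto intro: coeff_eq_0)
        then show ?thesis by simp
      qed
    qed
  qed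
  then have "t = s * [:coeff t 1 / coeff s 1:]" by simp
  then show ?thesis by (rule dvdI)
qed

lemma lin_indep: assumes ds: "degree (s::complex poly) \<le> 1" and dt: "degree t \<le> 1"
  and one: "degree s = 1 \<or> degree t = 1" and cop: "coprime s t"
  shows "coeff s 0 * coeff t 1 - coeff s 1 * coeff t 0 \<noteq> 0"
proof
  assume D: "coeff s 0 * coeff t 1 - coeff s 1 * coeff t 0 = 0"
  show False
  proof (cases "degree s = 1")
    case True
    have "s dvd t" by (rule lin_dvd[OF True dt D])
    then have "is_unit s" using cop coprime_common_divisor dvd_refl by blast
    moreover have "s \<noteq> 0" using True by auto
    ultimately have "degree s = 0" using is_unit_iff_degree by blast
    then show False using True by simp
  next
    case False
    then have dt1: "degree t = 1" using one by simp
    have D': "coeff t 0 * coeff s 1 - coeff t 1 * coeff s 0 = 0" using D by (simp add: algebra_simps)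
    have "t dvd s" by (rule lin_dvd[OF dt1 ds D'])
    then have "is_unit t" using cop coprime_common_divisor dvd_refl by blast
    moreover have "t \<noteq> 0" using dt1 by auto
    ultimately have "degree t = 0" using is_unit_iff_degree by blast
    then show False using dt1 by simp
  qed
qed

lemma deg_lin: "degree [:x, y::complex:] \<le> 1"
  by (rule order_trans[OF degree_pCons_le]) simp

context setting begin

lemma main_case:
  assumes w: "w \<in> carrier_vec (k+1)" and z: "N *\<^sub>v w = c \<cdot>\<^sub>v scroll_param a b p1 p2 u0 v0"
    and c0: "c \<noteq> 0" and p: "(p1,p2) \<noteq> (0,0)" and uv: "(u0,v0) \<noteq> (0,0)"
  shows "\<exists>\<mu> \<sigma> \<tau>. \<mu> \<noteq> 0 \<and> (\<sigma>,\<tau>) \<noteq> (0,0) \<and> N *\<^sub>v w = \<mu> \<cdot>\<^sub>v (N *\<^sub>v nu k \<sigma> \<tau>)"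
proof -
  obtain s t f g where cop: "coprime s t" and fX: "\<forall>i\<le>a. X i = f * s^(a-i) * t^i"
    and gX: "\<forall>j\<le>b. X (a+1+j) = g * s^(b-j) * t^j"
    using struct_thm by blast
  have n0: "\<not> (degree s = 0 \<and> degree t = 0)" using alpha0_false[OF cop fX gX] by blast
  have n2: "\<not> 2 \<le> max (degree s) (degree t)" using alpha2_false[OF cop fX gX] by blast
  have ds: "degree s \<le> 1" and dt: "degree t \<le> 1" and one: "degree s = 1 \<or> degree t = 1"
    using n0 n2 by (auto simp: max_def split: if_splits)
  have fk: "f = 0 \<or> degree f + a \<le> k"
  proof (cases "f = 0")
    case False
    have fX': "\<forall>i\<le>a. X (0+i) = f * s^(a-i) * t^i" using fX by simp
    show ?thesis using degs[OF cop fX' False] one by auto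
  qed simp
  have gk: "g = 0 \<or> degree g + b \<le> k"
  proof (cases "g = 0")
    case False
    show ?thesis using degs[OF cop gX False] one by auto
  qed simp
  define sa where "sa = coeff s 0"
  define sb where "sb = coeff s 1"
  define ta where "ta = coeff t 0"
  define tb where "tb = coeff t 1"
  define D where "D = sa * tb - sb * ta"
  have D0: "D \<noteq> 0" unfolding D_def sa_def sb_def ta_def tb_def by (rule lin_indep[OF ds dt one cop])
  have Sl: "bhom 1 s x y = sa * x + sb * y" for x y unfolding hom_lin sa_def sb_def by (rule refl)
  have Tl: "bhom 1 t x y = ta * x + tb * y" for x y unfolding hom_lin ta_def tb_def by (rule refl)
  have NU: "N *\<^sub>v nu k x y = scroll_param a b (bhom 1 s x y) (bhom 1 t x y) (bhom (k-a) f x y) (bhom (k-b) g x y)" for x y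
  proof (rule eq_vecI)
    fix i assume "i < dim_vec (scroll_param a b (bhom 1 s x y) (bhom 1 t x y) (bhom (k-a) f x y) (bhom (k-b) g x y))"
    then have i: "i < a+b+2" by simp
    have Ni: "(N *\<^sub>v nu k x y) $ i = bhom k (X i) x y" using N_nu[OF N i] .
    show "(N *\<^sub>v nu k x y) $ i = scroll_param a b (bhom 1 s x y) (bhom 1 t x y) (bhom (k-a) f x y) (bhom (k-b) g x y) $ i"
    proof (cases "i \<le> a")
      case True
      have "X i = f * s^(a-i) * t^i" using fX True by simp
      then show ?thesis using Ni True i hom_fst[OF ds dt fk True, of x y] by (simp add: sp_index)
    next
      case False
      define j where "j = i - a - 1"
      have j: "j \<le> b" "i = a+1+j" using False i unfolding j_def by auto
      have "X i = g * s^(b-j) * t^j" using gX j by simp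
      then show ?thesis using Ni False i hom_fst[OF ds dt gk j(1), of x y] j_def by (simp add: sp_index)
    qed
  qed (use N in simp)
  define \<sigma>0 where "\<sigma>0 = (tb * p1 - sb * p2) / D"
  define \<tau>0 where "\<tau>0 = (sa * p2 - ta * p1) / D"
  have S0: "bhom 1 s \<sigma>0 \<tau>0 = p1"
    unfolding Sl \<sigma>0_def \<tau>0_def by (rule cr1[OF D_def D0])
  have T0: "bhom 1 t \<sigma>0 \<tau>0 = p2"
    unfolding Tl \<sigma>0_def \<tau>0_def by (rule cr2[OF D_def D0])
  have st0: "(\<sigma>0, \<tau>0) \<noteq> (0,0)"
  proof
    assume "(\<sigma>0, \<tau>0) = (0,0)"
    then have "p1 = 0" "p2 = 0" using S0 T0 Sl Tl by auto
    then show False using p by simp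
  qed
  define l1 where "l1 = [: tb / D, - sb / D :]"
  define l2 where "l2 = [: - ta / D, sa / D :]"
  have dl1: "degree l1 \<le> 1" unfolding l1_def by (rule deg_lin)
  have dl2: "degree l2 \<le> 1" unfolding l2_def by (rule deg_lin)
  have c1: "coeff l1 0 = tb / D" "coeff l1 1 = - sb / D" by (simp_all add: l1_def)
  have c2: "coeff l2 0 = - ta / D" "coeff l2 1 = sa / D" by (simp_all add: l2_def)
  have L1: "bhom 1 l1 (bhom 1 s x y) (bhom 1 t x y) = x" for x y
    unfolding Sl Tl unfolding hom_lin c1 by (rule cr3[OF D_def D0])
  have L2: "bhom 1 l2 (bhom 1 s x y) (bhom 1 t x y) = y" for x y
    unfolding Sl Tl unfolding hom_lin c2 by (rule cr4[OF D_def D0])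
  have L1p: "bhom 1 l1 p1 p2 = \<sigma>0" unfolding hom_lin c1 \<sigma>0_def by (rule cr5)
  have L2p: "bhom 1 l2 p1 p2 = \<tau>0" unfolding hom_lin c2 \<tau>0_def by (rule cr6)
  define e where "e = a + b - k"
  define cp :: "complex poly" where "cp = (if p1 \<noteq> 0 then 1 else monom 1 e)"
  have dcp: "degree cp \<le> e" unfolding cp_def by (auto intro: order_trans[OF degree_monom_le])
  have cpv: "bhom e cp p1 p2 \<noteq> 0" using p unfolding cp_def by (auto simp: hom_one hom_monom)
  define E where "E = psubst (k-b) g l1 l2 * cp"
  define F' where "F' = - (psubst (k-a) f l1 l2 * cp)"
  have HE: "bhom a E x y = bhom (k-b) g (bhom 1 l1 x y) (bhom 1 l2 x y) * bhom e cp x y" for x y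
  proof (cases "g = 0")
    case False
    then have "degree g + b \<le> k" using gk by simp
    then have ae: "a = (k-b) + e" unfolding e_def using kab by simp
    show ?thesis unfolding E_def ae
      using hom_mult[OF degree_psubst[OF dl1 dl2] dcp] hom_psubst[OF dl1 dl2] by simp
  qed (simp add: E_def)
  have HF: "bhom b F' x y = - (bhom (k-a) f (bhom 1 l1 x y) (bhom 1 l2 x y) * bhom e cp x y)" for x y
  proof (cases "f = 0")
    case False
    then have "degree f + a \<le> k" using fk by simp
    then have be: "b = (k-a) + e" unfolding e_def using kab by simp
    show ?thesis unfolding F'_def be hom_uminus
      using hom_mult[OF degree_psubst[OF dl1 dl2] dcp] hom_psubst[OF dl1 dl2] by simp
  qed (simp add: F'_def)
  define h where "h = vec (a+b+2) (\<lambda>r. if r \<le> a then coeff E r else coeff F' (r-a-1))"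
  have hc: "h \<in> carrier_vec (a+b+2)" unfolding h_def by simp
  have dot_h: "h \<bullet> scroll_param a b x y u v = u * bhom a E x y + v * bhom b F' x y" for x y u v
  proof -
    have 1: "(\<Sum>i\<le>a. h $ i * x^(a-i) * y^i) = bhom a E x y"
      unfolding bhom_def by (rule sum.cong) (auto simp: h_def)
    have 2: "(\<Sum>j\<le>b. h $ (a+1+j) * x^(b-j) * y^j) = bhom b F' x y"
      unfolding bhom_def by (rule sum.cong) (auto simp: h_def)
    show ?thesis unfolding dot_sp[OF hc] 1 2 ..
  qed
  have C1: "h \<bullet> (N *\<^sub>v nu k 1 x) = 0" for x
  proof -
    have "h \<bullet> (N *\<^sub>v nu k 1 x) = bhom (k-a) f 1 x * bhom a E (bhom 1 s 1 x) (bhom 1 t 1 x)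
        + bhom (k-b) g 1 x * bhom b F' (bhom 1 s 1 x) (bhom 1 t 1 x)"
      unfolding NU dot_h ..
    also have "\<dots> = bhom (k-a) f 1 x * (bhom (k-b) g 1 x * bhom e cp (bhom 1 s 1 x) (bhom 1 t 1 x))
        + bhom (k-b) g 1 x * (- (bhom (k-a) f 1 x * bhom e cp (bhom 1 s 1 x) (bhom 1 t 1 x)))"
      unfolding HE HF L1 L2 ..
    also have "\<dots> = 0" by (simp add: algebra_simps)
    finally show ?thesis .
  qed
  have C1': "\<forall>x. h \<bullet> (N *\<^sub>v nu k 1 x) = 0" using C1 by blast
  have C3: "h \<bullet> (N *\<^sub>v w) = 0" by (rule dual_zero[OF hc N C1' w])
  have dh: "dim_vec h = a+b+2" unfolding h_def by simp
  have "h \<bullet> (N *\<^sub>v w) = c * (h \<bullet> scroll_param a b p1 p2 u0 v0)"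
    unfolding z using dh by simp
  then have hz: "h \<bullet> scroll_param a b p1 p2 u0 v0 = 0" using C3 c0 by simp
  define F0 where "F0 = bhom (k-a) f \<sigma>0 \<tau>0"
  define G0 where "G0 = bhom (k-b) g \<sigma>0 \<tau>0"
  have "bhom e cp p1 p2 * (u0 * G0 - v0 * F0) = h \<bullet> scroll_param a b p1 p2 u0 v0"
    unfolding dot_h HE HF L1p L2p F0_def G0_def by (simp add: algebra_simps)
  then have key: "u0 * G0 = v0 * F0" using hz cpv by simp
  have NP: "N *\<^sub>v nu k \<sigma>0 \<tau>0 = scroll_param a b p1 p2 F0 G0"
    unfolding NU S0 T0 F0_def G0_def ..
  have FG: "(F0, G0) \<noteq> (0,0)"
  proof
    assume "(F0, G0) = (0,0)"
    then have "N *\<^sub>v nu k \<sigma>0 \<tau>0 = 0\<^sub>v (a+b+2)" using NP sp_zero by simp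
    then have "nu k \<sigma>0 \<tau>0 = 0\<^sub>v (k+1)" using inj nu_carrier by blast
    then show False using nu_nz[OF st0] by simp
  qed
  define \<mu> where "\<mu> = (if F0 \<noteq> 0 then u0 / F0 else v0 / G0)"
  have uv\<mu>: "u0 = \<mu> * F0 \<and> v0 = \<mu> * G0"
  proof (cases "F0 = 0")
    case True
    then have "G0 \<noteq> 0" using FG by simp
    then show ?thesis using True key unfolding \<mu>_def by simp
  next
    case False
    then show ?thesis using key unfolding \<mu>_def by (simp add: field_simps)
  qed
  have \<mu>0: "\<mu> \<noteq> 0" using uv\<mu> uv by auto
  have spe: "scroll_param a b p1 p2 u0 v0 = \<mu> \<cdot>\<^sub>v scroll_param a b p1 p2 F0 G0"
    using uv\<mu> sp_smult[of a b p1 p2 \<mu> F0 G0] by simp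
  have "N *\<^sub>v w = (c * \<mu>) \<cdot>\<^sub>v (N *\<^sub>v nu k \<sigma>0 \<tau>0)"
    unfolding z spe NP by (simp add: smult_smult_assoc)
  then show ?thesis using c0 \<mu>0 st0 by (intro exI[of _ "c * \<mu>"] exI[of _ \<sigma>0] exI[of _ \<tau>0]) auto
qed

end


lemma scroll_cone_carrier: "x \<in> scroll_cone a b \<Longrightarrow> x \<in> carrier_vec (a+b+2)"
  unfolding scroll_cone_def proj_cone_def by (auto intro!: carrier_vecI)

lemma nu_rnc: "(s,t) \<noteq> (0,0) \<Longrightarrow> c \<noteq> 0 \<Longrightarrow> c \<cdot>\<^sub>v nu k s t \<in> rnc_cone k"
  unfolding rnc_cone_def proj_cone_def nu_def by blast

lemma span_lemma:
  assumes B: "B \<in> carrier_mat m (k+1)" and Binj: "\<forall>x\<in>carrier_vec (k+1). B *\<^sub>v x = 0\<^sub>v m \<longrightarrow> x = 0\<^sub>v (k+1)"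
    and C: "C \<in> carrier_mat m (k+1)" and Cinj: "\<forall>x\<in>carrier_vec (k+1). C *\<^sub>v x = 0\<^sub>v m \<longrightarrow> x = 0\<^sub>v (k+1)"
    and YL: "\<forall>x::complex. \<exists>y\<in>carrier_vec (k+1). B *\<^sub>v nu k 1 x = C *\<^sub>v y"
  shows "\<exists>Gi\<in>carrier_mat (k+1) (k+1). C = B * Gi"
proof -
  have "\<forall>l. \<exists>y. y \<in> carrier_vec (k+1) \<and> B *\<^sub>v nu k 1 (of_nat l) = C *\<^sub>v y" using YL by blast
  then obtain yy where yy: "\<And>l. yy l \<in> carrier_vec (k+1)" "\<And>l. B *\<^sub>v nu k 1 (of_nat l) = C *\<^sub>v yy l"
    by metis
  define Ym where "Ym = mat (k+1) (k+1) (\<lambda>(i,l). yy l $ i)"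
  define V where "V = mat (k+1) (k+1) (\<lambda>(j,l). nu k 1 (of_nat l) $ j)"
  have Ym: "Ym \<in> carrier_mat (k+1) (k+1)" unfolding Ym_def by simp
  have V: "V \<in> carrier_mat (k+1) (k+1)" unfolding V_def by simp
  have colY: "col Ym l = yy l" if "l < k+1" for l
    using that yy(1)[of l] unfolding Ym_def by (intro eq_vecI) auto
  have colV: "col V l = nu k 1 (of_nat l)" if "l < k+1" for l
    using that unfolding V_def by (intro eq_vecI) (auto simp: nu_def)
  have CY: "C * Ym = B * V"
  proof (rule eq_matI)
    fix i l assume i: "i < dim_row (B * V)" and l: "l < dim_col (B * V)"
    then have i': "i < m" and l': "l < k+1" using B V by auto
    have "(C * Ym) $$ (i,l) = row C i \<bullet> col Ym l" using i' l' C Ym by simp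
    also have "\<dots> = (C *\<^sub>v yy l) $ i" using i' C colY[OF l'] by simp
    also have "\<dots> = (B *\<^sub>v nu k 1 (of_nat l)) $ i" using yy(2)[of l] by simp
    also have "\<dots> = row B i \<bullet> col V l" using i' B colV[OF l'] by simp
    also have "\<dots> = (B * V) $$ (i,l)" using i' l' B V by simp
    finally show "(C * Ym) $$ (i,l) = (B * V) $$ (i,l)" .
  qed (use B C V Ym in auto)
  have Vinj: "\<forall>c\<in>carrier_vec (k+1). V *\<^sub>v c = 0\<^sub>v (k+1) \<longrightarrow> c = 0\<^sub>v (k+1)"
  proof (intro ballI impI)
    fix c assume c: "c \<in> carrier_vec (k+1)" and Vc: "V *\<^sub>v c = 0\<^sub>v (k+1)"
    show "c = 0\<^sub>v (k+1)"
    proof (rule vander[OF c], intro allI impI)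
      fix j assume j: "j \<le> k"
      have "(V *\<^sub>v c) $ j = 0" using Vc j by simp
      moreover have "(V *\<^sub>v c) $ j = (\<Sum>l<k+1. c $ l * of_nat l ^ j)"
        using j c unfolding V_def by (simp add: scalar_prod_def nu_def atLeast0LessThan mult.commute)
      ultimately show "(\<Sum>l<k+1. c $ l * of_nat l ^ j) = 0" by simp
    qed
  qed
  obtain Vi where Vi: "Vi \<in> carrier_mat (k+1) (k+1)" "V * Vi = 1\<^sub>m (k+1)"
    using units_inv[OF V Vinj] by blast
  define G where "G = Ym * Vi"
  have G: "G \<in> carrier_mat (k+1) (k+1)" unfolding G_def using Ym Vi by simp
  have CG: "C * G = B"
  proof -
    have "C * G = (C * Ym) * Vi" unfolding G_def using C Ym Vi by simp
    also have "\<dots> = (B * V) * Vi" using CY by simp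
    also have "\<dots> = B * (V * Vi)" using B V Vi by simp
    also have "\<dots> = B" using Vi B by simp
    finally show ?thesis .
  qed
  have Ginj: "\<forall>x\<in>carrier_vec (k+1). G *\<^sub>v x = 0\<^sub>v (k+1) \<longrightarrow> x = 0\<^sub>v (k+1)"
  proof (intro ballI impI)
    fix x assume x: "x \<in> carrier_vec (k+1)" and Gx: "G *\<^sub>v x = 0\<^sub>v (k+1)"
    have "B *\<^sub>v x = C *\<^sub>v (G *\<^sub>v x)" using CG C G x by (metis assoc_mult_mat_vec)
    also have "\<dots> = C *\<^sub>v 0\<^sub>v (k+1)" using Gx by simp
    also have "\<dots> = 0\<^sub>v m" using C by (intro eq_vecI) (auto simp: scalar_prod_def)
    finally show "x = 0\<^sub>v (k+1)" using Binj x by blast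
  qed
  obtain Gi where Gi: "Gi \<in> carrier_mat (k+1) (k+1)" "G * Gi = 1\<^sub>m (k+1)"
    using units_inv[OF G Ginj] by blast
  have "C = C * (G * Gi)" using Gi C by simp
  also have "\<dots> = (C * G) * Gi" using C G Gi by simp
  also have "\<dots> = B * Gi" using CG by simp
  finally show ?thesis using Gi by blast
qed


theorem lemma2p11:
  fixes n k :: nat and W Y L :: "complex vec set"
  assumes "smooth_rat_normal_surface_scroll n W"
    and "rat_normal_curve n k Y"
    and "Y \<subseteq> W"
    and "2 \<le> k" and "k \<le> n - 1"
    and "lin_subspace n k L"
    and "Y \<subseteq> W \<inter> L"
  shows "Y = W \<inter> L"
proof -
  obtain a b A where ab: "1 \<le> a" "1 \<le> b" "a + b + 1 = n"
    and A: "A \<in> carrier_mat (n+1) (n+1)" "invertible_mat A"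
    and W: "W = (\<lambda>x. A *\<^sub>v x) ` scroll_cone a b"
    using assms(1) unfolding smooth_rat_normal_surface_scroll_def by blast
  obtain B where Bemb: "lin_embedding n k B" and Y: "Y = (\<lambda>x. B *\<^sub>v x) ` rnc_cone k"
    using assms(2) unfolding rat_normal_curve_def by blast
  obtain C where Cemb: "lin_embedding n k C"
    and L: "L = {C *\<^sub>v y | y. y \<in> carrier_vec (k + 1) \<and> y \<noteq> 0\<^sub>v (k + 1)}"
    using assms(6) unfolding lin_subspace_def by blast
  have n1: "n + 1 = a + b + 2" using ab by simp
  have B: "B \<in> carrier_mat (a+b+2) (k+1)" and Binj: "\<forall>x\<in>carrier_vec (k+1). B *\<^sub>v x = 0\<^sub>v (a+b+2) \<longrightarrow> x = 0\<^sub>v (k+1)"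
    using Bemb unfolding lin_embedding_def n1 by auto
  have C: "C \<in> carrier_mat (a+b+2) (k+1)" and Cinj: "\<forall>x\<in>carrier_vec (k+1). C *\<^sub>v x = 0\<^sub>v (a+b+2) \<longrightarrow> x = 0\<^sub>v (k+1)"
    using Cemb unfolding lin_embedding_def n1 by auto
  have A': "A \<in> carrier_mat (a+b+2) (a+b+2)" using A n1 by simp
  obtain Ai where Ai1: "A * Ai = 1\<^sub>m (dim_row A)" and Ai2: "Ai * A = 1\<^sub>m (dim_row Ai)"
    using A(2) unfolding invertible_mat_def inverts_mat_def by blast
  have "dim_col Ai = a+b+2" using Ai1 A' by (metis index_mult_mat(3) index_one_mat(3) carrier_matD(1))
  moreover have "dim_row Ai = a+b+2" using Ai2 A' by (metis index_mult_mat(3) index_one_mat(3) carrier_matD(2))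
  ultimately have Ai: "Ai \<in> carrier_mat (a+b+2) (a+b+2)" by auto
  have AAi: "A * Ai = 1\<^sub>m (a+b+2)" using Ai1 A' by simp
  have AiA: "Ai * A = 1\<^sub>m (a+b+2)" using Ai2 Ai by simp
  define N where "N = Ai * B"
  have N: "N \<in> carrier_mat (a+b+2) (k+1)" unfolding N_def using Ai B by simp
  have AN: "A * N = B" unfolding N_def using A' Ai B AAi by (simp flip: assoc_mult_mat)
  have ANv: "A *\<^sub>v (N *\<^sub>v v) = B *\<^sub>v v" if "v \<in> carrier_vec (k+1)" for v
    using AN A' N that by (metis assoc_mult_mat_vec)
  have Ninj: "\<forall>w\<in>carrier_vec (k+1). N *\<^sub>v w = 0\<^sub>v (a+b+2) \<longrightarrow> w = 0\<^sub>v (k+1)"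
  proof (intro ballI impI)
    fix w assume w: "w \<in> carrier_vec (k+1)" and Nw: "N *\<^sub>v w = 0\<^sub>v (a+b+2)"
    have "B *\<^sub>v w = A *\<^sub>v 0\<^sub>v (a+b+2)" using ANv[OF w] Nw by simp
    also have "\<dots> = 0\<^sub>v (a+b+2)" using A' by (intro eq_vecI) (auto simp: scalar_prod_def)
    finally show "w = 0\<^sub>v (k+1)" using Binj w by blast
  qed
  have AiAv: "Ai *\<^sub>v (A *\<^sub>v x) = x" if "x \<in> carrier_vec (a+b+2)" for x
    using AiA Ai A' that by (metis assoc_mult_mat_vec one_mult_mat_vec)
  have BnuY: "B *\<^sub>v nu k s t \<in> Y" if "(s,t) \<noteq> (0,0)" for s t
  proof -
    have "1 \<cdot>\<^sub>v nu k s t \<in> rnc_cone k" by (rule nu_rnc[OF that]) simp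
    then show ?thesis unfolding Y by simp
  qed
  have curve: "\<forall>s t. (s,t) \<noteq> (0,0) \<longrightarrow> N *\<^sub>v nu k s t \<in> scroll_cone a b"
  proof (intro allI impI)
    fix s t :: complex assume st: "(s,t) \<noteq> (0,0)"
    have "B *\<^sub>v nu k s t \<in> W" using BnuY[OF st] assms(3) by blast
    then obtain x' where x': "x' \<in> scroll_cone a b" "B *\<^sub>v nu k s t = A *\<^sub>v x'" unfolding W by blast
    have x'c: "x' \<in> carrier_vec (a+b+2)" by (rule scroll_cone_carrier[OF x'(1)])
    have "N *\<^sub>v nu k s t = Ai *\<^sub>v (B *\<^sub>v nu k s t)" unfolding N_def using Ai B nu_carrier by simp
    also have "\<dots> = x'" using x'(2) AiAv[OF x'c] by simp
    finally show "N *\<^sub>v nu k s t \<in> scroll_cone a b" using x'(1) by simp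
  qed
  interpret setting a b k N
    using ab assms(4,5) N Ninj curve by unfold_locales auto
  have YL: "\<forall>x::complex. \<exists>y\<in>carrier_vec (k+1). B *\<^sub>v nu k 1 x = C *\<^sub>v y"
  proof
    fix x :: complex
    have "B *\<^sub>v nu k 1 x \<in> L" using BnuY[of 1 x] assms(7) by auto
    then show "\<exists>y\<in>carrier_vec (k+1). B *\<^sub>v nu k 1 x = C *\<^sub>v y" unfolding L by blast
  qed
  obtain Gi where Gi: "Gi \<in> carrier_mat (k+1) (k+1)" "C = B * Gi"
    using span_lemma[OF B Binj C Cinj YL] by blast
  have "W \<inter> L \<subseteq> Y"
  proof
    fix z assume z: "z \<in> W \<inter> L"
    then obtain z'' where z'': "z'' \<in> scroll_cone a b" "z = A *\<^sub>v z''" unfolding W by blast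
    obtain c v where cv: "z'' = c \<cdot>\<^sub>v v" "c \<noteq> 0"
      "v \<in> {scroll_param a b s t u v | s t u v. (s, t) \<noteq> (0, 0) \<and> (u, v) \<noteq> (0, 0)}"
      using z''(1) unfolding scroll_cone_def proj_cone_def by blast
    then obtain p1 p2 u0 v0 where sp: "z'' = c \<cdot>\<^sub>v scroll_param a b p1 p2 u0 v0"
      "(p1,p2) \<noteq> (0,0)" "(u0,v0) \<noteq> (0,0)" by blast
    obtain y where y: "y \<in> carrier_vec (k+1)" "z = C *\<^sub>v y" using z unfolding L by blast
    define w where "w = Gi *\<^sub>v y"
    have w: "w \<in> carrier_vec (k+1)" unfolding w_def using Gi y by simp
    have zB: "z = B *\<^sub>v w" unfolding w_def y(2) Gi(2) using B Gi y by simp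
    have z''c: "z'' \<in> carrier_vec (a+b+2)" by (rule scroll_cone_carrier[OF z''(1)])
    have "N *\<^sub>v w = Ai *\<^sub>v (B *\<^sub>v w)" unfolding N_def using Ai B w by simp
    also have "\<dots> = z''" unfolding zB[symmetric] z''(2) by (rule AiAv[OF z''c])
    finally have Nw: "N *\<^sub>v w = c \<cdot>\<^sub>v scroll_param a b p1 p2 u0 v0" using sp(1) by simp
    obtain \<mu> \<sigma> \<tau> where m: "\<mu> \<noteq> 0" "(\<sigma>,\<tau>) \<noteq> (0,0)" "N *\<^sub>v w = \<mu> \<cdot>\<^sub>v (N *\<^sub>v nu k \<sigma> \<tau>)"
      using main_case[OF w Nw cv(2) sp(2,3)] by blast
    have "z = A *\<^sub>v (N *\<^sub>v w)" using zB ANv[OF w] by simp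
    also have "\<dots> = \<mu> \<cdot>\<^sub>v (A *\<^sub>v (N *\<^sub>v nu k \<sigma> \<tau>))" unfolding m(3)
      using mult_mat_vec[OF A'] N nu_carrier by simp
    also have "\<dots> = \<mu> \<cdot>\<^sub>v (B *\<^sub>v nu k \<sigma> \<tau>)" using ANv[OF nu_carrier] by simp
    also have "\<dots> = B *\<^sub>v (\<mu> \<cdot>\<^sub>v nu k \<sigma> \<tau>)" using mult_mat_vec[OF B nu_carrier] by simp
    finally have "z = B *\<^sub>v (\<mu> \<cdot>\<^sub>v nu k \<sigma> \<tau>)" .
    moreover have "\<mu> \<cdot>\<^sub>v nu k \<sigma> \<tau> \<in> rnc_cone k" by (rule nu_rnc[OF m(2) m(1)])
    ultimately show "z \<in> Y" unfolding Y by blast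
  qed
  then show ?thesis using assms(7) by blast
qed

end
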